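(* Any conventional higher-order logic built on Combinatory ReFLect (CR) is inconsistent.
   Context: Combinatory ReFLect (CR) is defined as follows. Types: $\sigma ::= \mathsf{bool} \mid \mathsf{unit} \mid \mathsf{term} \mid \sigma_1 \to \sigma_2$. Terms: $e ::= \mathsf{I}_\sigma \mid \mathsf{K}_{\sigma,\tau} \mid \mathsf{S}_{\sigma,\tau,\upsilon} \mid \mathsf{value}_\sigma \mid \mathsf{lift} \mid \mathsf{app} \mid e_1\,e_2 \mid \ulcorner e\urcorner$, where $\ulcorner e\urcorner$ is the quotation of $e$. Typing rules: $\mathsf{I}_\sigma:\sigma\to\sigma$; $\mathsf{K}_{\sigma,\tau}:\sigma\to\tau\to\sigma$; $\mathsf{S}_{\sigma,\tau,\upsilon}:(\sigma\to\tau\to\upsilon)\to(\sigma\to\tau)\to\sigma\to\upsilon$; $\mathsf{value}_\sigma:\mathsf{term}\to\sigma$; $\mathsf{lift}:\mathsf{term}\to\mathsf{term}$; $\mathsf{app}:\mathsf{term}\to\mathsf{term}\to\mathsf{term}$; if $e_1:\sigma\to\tau$ and $e_2:\sigma$ then $e_1\,e_2:\tau$; if $e:\sigma$ then $\ulcorner e\urcorner:\mathsf{term}$. Reduction rules: $\mathsf{I}_\sigma\,e\Rightarrow e$; $\mathsf{K}_{\sigma,\tau}\,e_1\,e_2\Rightarrow e_1$; $\mathsf{S}_{\sigma,\tau,\upsilon}\,e_1\,e_2\,e_3\Rightarrow e_1\,e_3\,(e_2\,e_3)$; if $e:\sigma$ then $\mathsf{value}_\sigma\,\ulcorner e\urcorner\Rightarrow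 e$; $\mathsf{lift}\,\ulcorner s\urcorner\Rightarrow\ulcorner\ulcorner s\urcorner\urcorner$; if $e_1\,e_2$ is well typed then $\mathsf{app}\,\ulcorner e_1\urcorner\,\ulcorner e_2\urcorner\Rightarrow\ulcorner e_1\,e_2\urcorner$. A conventional higher-order logic built on CR is one formulated in the style of Church's simple theory of types / the HOL logic, but with CR (extended by the usual logical constants, including equality and negation $\neg:\mathsf{bool}\to\mathsf{bool}$, typed by the same type system) in place of the simply typed $\lambda$-calculus: its terms of type $\mathsf{bool}$ are formulas, provable equality is reflexive, symmetric, transitive and closed under congruence, every instance of a reduction rule $e\Rightarrow e'$ yields a theorem $\vdash e=e'$, and it has the usual classical rules for negation (so that a proof of $\vdash p = \neg p$ for a formula $p$ yields a contradiction). Inconsistent means that a contradiction (every formula, in particular falsity) is provable. *)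

theory Defs
  imports Main
begin

datatype ty = TBool | TUnit | TTerm | TFun ty ty

datatype tm =
    CI ty
  | CK ty ty
  | CS ty ty ty
  | CValue ty
  | CLift
  | CApp
  | CEq ty
  | CNeg
  | CFalse
  | Ap tm tm
  | Quote tm

inductive has_type :: "tm \<Rightarrow> ty \<Rightarrow> bool" where
  ty_I: "has_type (CI s) (TFun s s)"
| ty_K: "has_type (CK s t) (TFun s (TFun t s))"
| ty_S: "has_type (CS s t u)
           (TFun (TFun s (TFun t u)) (TFun (TFun s t) (TFun s u)))"
| ty_value: "has_type (CValue s) (TFun TTerm s)"
| ty_lift: "has_type CLift (TFun TTerm TTerm)"
| ty_app: "has_type CApp (TFun TTerm (TFun TTerm TTerm))"
| ty_eq: "has_type (CEq s) (TFun s (TFun s TBool))"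
| ty_neg: "has_type CNeg (TFun TBool TBool)"
| ty_false: "has_type CFalse TBool"
| ty_Ap: "has_type e1 (TFun s t) \<Longrightarrow> has_type e2 s \<Longrightarrow> has_type (Ap e1 e2) t"
| ty_Quote: "has_type e s \<Longrightarrow> has_type (Quote e) TTerm"

definition well_typed :: "tm \<Rightarrow> bool" where
  "well_typed e \<longleftrightarrow> (\<exists>s. has_type e s)"

inductive red :: "tm \<Rightarrow> tm \<Rightarrow> bool" where
  red_I: "red (Ap (CI s) e) e"
| red_K: "red (Ap (Ap (CK s t) e1) e2) e1"
| red_S: "red (Ap (Ap (Ap (CS s t u) e1) e2) e3) (Ap (Ap e1 e3) (Ap e2 e3))"
| red_value: "has_type e s \<Longrightarrow> red (Ap (CValue s) (Quote e)) e"
| red_lift: "red (Ap CLift (Quote e)) (Quote (Quote e))"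
| red_app: "well_typed (Ap e1 e2) \<Longrightarrow>
             red (Ap (Ap CApp (Quote e1)) (Quote e2)) (Quote (Ap e1 e2))"

abbreviation mk_eq :: "ty \<Rightarrow> tm \<Rightarrow> tm \<Rightarrow> tm" where
  "mk_eq s a b \<equiv> Ap (Ap (CEq s) a) b"

text \<open>A logic is given by its derivability relation on sequents
  (hypotheses \<turnstile> conclusion). It is conventional if it is closed under the
  following rules.\<close>

definition conventional_logic :: "(tm set \<Rightarrow> tm \<Rightarrow> bool) \<Rightarrow> bool" where
  "conventional_logic thm \<longleftrightarrow>
     (\<forall>\<Gamma> p. p \<in> \<Gamma> \<longrightarrow> has_type p TBool \<longrightarrow> thm \<Gamma> p)
   \<and> (\<forall>\<Gamma> e s. has_type e s \<longrightarrow> thm \<Gamma> (mk_eq s e e))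
   \<and> (\<forall>\<Gamma> s a b. thm \<Gamma> (mk_eq s a b) \<longrightarrow> thm \<Gamma> (mk_eq s b a))
   \<and> (\<forall>\<Gamma> s a b c. thm \<Gamma> (mk_eq s a b) \<longrightarrow> thm \<Gamma> (mk_eq s b c) \<longrightarrow> thm \<Gamma> (mk_eq s a c))
   \<and> (\<forall>\<Gamma> s t f g a b. thm \<Gamma> (mk_eq (TFun s t) f g) \<longrightarrow> thm \<Gamma> (mk_eq s a b)
        \<longrightarrow> thm \<Gamma> (mk_eq t (Ap f a) (Ap g b)))
   \<and> (\<forall>\<Gamma> e e' s. red e e' \<longrightarrow> has_type e s \<longrightarrow> thm \<Gamma> (mk_eq s e e'))
   \<and> (\<forall>\<Gamma> p q. thm \<Gamma> (mk_eq TBool p q) \<longrightarrow> thm \<Gamma> p \<longrightarrow> thm \<Gamma> q)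
   \<and> (\<forall>\<Gamma> p. has_type p TBool \<longrightarrow> thm (insert p \<Gamma>) CFalse \<longrightarrow> thm \<Gamma> (Ap CNeg p))
   \<and> (\<forall>\<Gamma> p. thm \<Gamma> (Ap CNeg p) \<longrightarrow> thm \<Gamma> p \<longrightarrow> thm \<Gamma> CFalse)
   \<and> (\<forall>\<Gamma> p. has_type p TBool \<longrightarrow> thm (insert (Ap CNeg p) \<Gamma>) CFalse \<longrightarrow> thm \<Gamma> p)
   \<and> (\<forall>\<Gamma> q. thm \<Gamma> CFalse \<longrightarrow> has_type q TBool \<longrightarrow> thm \<Gamma> q)"

definition inconsistent :: "(tm set \<Rightarrow> tm \<Rightarrow> bool) \<Rightarrow> bool" where
  "inconsistent thm \<longleftrightarrow> thm {} CFalse \<and> (\<forall>q. has_type q TBool \<longrightarrow> thm {} q)"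

end

theory Submission
  imports Defs
begin

abbreviation "Hc \<equiv> Ap (Ap (CS TTerm TTerm TTerm) CApp) CLift"
abbreviation "Gc \<equiv> Ap (Ap (CS TTerm TTerm TBool) (Ap (CK (TFun TTerm TBool) TTerm) (CValue TBool))) Hc"
abbreviation "Dc \<equiv> Ap (Ap (CS TTerm TBool TBool) (Ap (CK (TFun TBool TBool) TTerm) CNeg)) Gc"
abbreviation "qc \<equiv> Quote Dc"
abbreviation "Lc \<equiv> Ap Dc qc"

lemma tyH: "has_type Hc (TFun TTerm TTerm)"
  by (meson has_type.intros)
lemma tyG: "has_type Gc (TFun TTerm TBool)"
  by (meson has_type.intros tyH)
lemma tyD: "has_type Dc (TFun TTerm TBool)"
  by (meson has_type.intros tyG)
lemma tyq: "has_type qc TTerm"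
  by (meson has_type.intros tyD)
lemma tyL: "has_type Lc TBool"
  by (meson has_type.intros tyD tyq)

theorem corollary1:
  assumes "conventional_logic thm"
  shows "inconsistent thm"
proof -
  note c = assms[unfolded conventional_logic_def]
  have hyp: "\<And>\<Gamma> p. p \<in> \<Gamma> \<Longrightarrow> has_type p TBool \<Longrightarrow> thm \<Gamma> p" using c[THEN conjunct1] by blast
  have refl: "\<And>\<Gamma> e s. has_type e s \<Longrightarrow> thm \<Gamma> (mk_eq s e e)" using c[THEN conjunct2, THEN conjunct1] by blast
  have sym: "\<And>\<Gamma> s a b. thm \<Gamma> (mk_eq s a b) \<Longrightarrow> thm \<Gamma> (mk_eq s b a)" using c[THEN conjunct2, THEN conjunct2, THEN conjunct1] by blast
  have trans: "\<And>\<Gamma> s a b d. thm \<Gamma> (mk_eq s a b) \<Longrightarrow> thm \<Gamma> (mk_eq s b d) \<Longrightarrow> thm \<Gamma> (mk_eq s a d)" using c[THEN conjunct2, THEN conjunct2, THEN conjunct2, THEN conjunct1] by blast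
  have cong: "\<And>\<Gamma> s t f g a b. thm \<Gamma> (mk_eq (TFun s t) f g) \<Longrightarrow> thm \<Gamma> (mk_eq s a b)
        \<Longrightarrow> thm \<Gamma> (mk_eq t (Ap f a) (Ap g b))" using c[THEN conjunct2, THEN conjunct2, THEN conjunct2, THEN conjunct2, THEN conjunct1] by blast
  have rd: "\<And>\<Gamma> e e' s. red e e' \<Longrightarrow> has_type e s \<Longrightarrow> thm \<Gamma> (mk_eq s e e')" using c[THEN conjunct2, THEN conjunct2, THEN conjunct2, THEN conjunct2, THEN conjunct2, THEN conjunct1] by blast
  have mp: "\<And>\<Gamma> p q. thm \<Gamma> (mk_eq TBool p q) \<Longrightarrow> thm \<Gamma> p \<Longrightarrow> thm \<Gamma> q" using c[THEN conjunct2, THEN conjunct2, THEN conjunct2, THEN conjunct2, THEN conjunct2, THEN conjunct2, THEN conjunct1] by blast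
  have negI: "\<And>\<Gamma> p. has_type p TBool \<Longrightarrow> thm (insert p \<Gamma>) CFalse \<Longrightarrow> thm \<Gamma> (Ap CNeg p)" using c[THEN conjunct2, THEN conjunct2, THEN conjunct2, THEN conjunct2, THEN conjunct2, THEN conjunct2, THEN conjunct2, THEN conjunct1] by blast
  have negE: "\<And>\<Gamma> p. thm \<Gamma> (Ap CNeg p) \<Longrightarrow> thm \<Gamma> p \<Longrightarrow> thm \<Gamma> CFalse" using c[THEN conjunct2, THEN conjunct2, THEN conjunct2, THEN conjunct2, THEN conjunct2, THEN conjunct2, THEN conjunct2, THEN conjunct2, THEN conjunct1] by blast
  have exf: "\<And>\<Gamma> q. thm \<Gamma> CFalse \<Longrightarrow> has_type q TBool \<Longrightarrow> thm \<Gamma> q" using c[THEN conjunct2, THEN conjunct2, THEN conjunct2, THEN conjunct2, THEN conjunct2, THEN conjunct2, THEN conjunct2, THEN conjunct2, THEN conjunct2, THEN conjunct2] by blast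
  have key: "\<And>\<Gamma>. thm \<Gamma> (mk_eq TBool Lc (Ap CNeg Lc))"
  proof -
    fix \<Gamma>
    have tK1: "has_type (Ap (CK (TFun TBool TBool) TTerm) CNeg) (TFun TTerm (TFun TBool TBool))"
      by (meson has_type.intros)
    have tK2: "has_type (Ap (CK (TFun TTerm TBool) TTerm) (CValue TBool)) (TFun TTerm (TFun TTerm TBool))"
      by (meson has_type.intros)
    have tApp: "has_type (Ap CApp qc) (TFun TTerm TTerm)" by (meson has_type.intros tyq)
    have tGq: "has_type (Ap Gc qc) TBool" by (meson has_type.intros tyG tyq)
    have tHq: "has_type (Ap Hc qc) TTerm" by (meson has_type.intros tyH tyq)
    have e1: "thm \<Gamma> (mk_eq TBool Lc (Ap (Ap (Ap (CK (TFun TBool TBool) TTerm) CNeg) qc) (Ap Gc qc)))"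
      by (rule rd[OF red_S tyL])
    have e2: "thm \<Gamma> (mk_eq (TFun TBool TBool) (Ap (Ap (CK (TFun TBool TBool) TTerm) CNeg) qc) CNeg)"
      by (rule rd[OF red_K]) (meson has_type.intros tyq tK1)
    have e3: "thm \<Gamma> (mk_eq TBool (Ap Gc qc) (Ap (Ap (Ap (CK (TFun TTerm TBool) TTerm) (CValue TBool)) qc) (Ap Hc qc)))"
      by (rule rd[OF red_S tGq])
    have e4: "thm \<Gamma> (mk_eq (TFun TTerm TBool) (Ap (Ap (CK (TFun TTerm TBool) TTerm) (CValue TBool)) qc) (CValue TBool))"
      by (rule rd[OF red_K]) (meson has_type.intros tyq tK2)
    have e5: "thm \<Gamma> (mk_eq TTerm (Ap Hc qc) (Ap (Ap CApp qc) (Ap CLift qc)))"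
      by (rule rd[OF red_S tHq])
    have e6: "thm \<Gamma> (mk_eq TTerm (Ap CLift qc) (Quote qc))"
      by (rule rd[OF red_lift]) (meson has_type.intros tyq)
    have wt: "well_typed Lc" using tyL well_typed_def by blast
    have e7: "thm \<Gamma> (mk_eq TTerm (Ap (Ap CApp qc) (Quote qc)) (Quote Lc))"
      by (rule rd[OF red_app[OF wt]]) (meson has_type.intros tyq tApp)
    have e8: "thm \<Gamma> (mk_eq TBool (Ap (CValue TBool) (Quote Lc)) Lc)"
      by (rule rd[OF red_value[OF tyL]]) (meson has_type.intros tyL)
    have "thm \<Gamma> (mk_eq TTerm (Ap Hc qc) (Quote Lc))"
      using trans[OF e5 trans[OF cong[OF refl[OF tApp] e6] e7]] .
    hence "thm \<Gamma> (mk_eq TBool (Ap Gc qc) Lc)"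
      using trans[OF e3 trans[OF cong[OF e4] e8]] by blast
    hence "thm \<Gamma> (mk_eq TBool (Ap (Ap (Ap (CK (TFun TBool TBool) TTerm) CNeg) qc) (Ap Gc qc)) (Ap CNeg Lc))"
      using cong[OF e2] by blast
    thus "thm \<Gamma> (mk_eq TBool Lc (Ap CNeg Lc))" using trans[OF e1] by blast
  qed
  have "thm (insert Lc {}) CFalse"
  proof -
    have h: "thm (insert Lc {}) Lc" by (rule hyp) (auto simp: tyL)
    show ?thesis using negE[OF mp[OF key h] h] .
  qed
  hence nL: "thm {} (Ap CNeg Lc)" by (rule negI[OF tyL])
  have L: "thm {} Lc" using mp[OF sym[OF key] nL] .
  have F: "thm {} CFalse" using negE[OF nL L] .
  show ?thesis unfolding inconsistent_def using F exf by blast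
qed

end
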